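(* In the setting of the context, suppose $\beta=\beta_0>1$. For $y\ge1$ let $\pi'(y)=\sum_{\tau:\ \lambda(\tau)\le y}\mathrm{tr}({}^t\Psi_\tau)$, the sum over periodic orbits $\tau$ of $\sigma$ with minimal period $\lambda(\tau)\le y$. Then for every $\gamma'>1$, $\frac{\pi'(y)}{\beta^{\gamma'y}}\to0$ as $y\to+\infty$.
   Context: $\Sigma=\{1,\dots,t\}^{\mathbb{N}}$, $\sigma$ the shift, $ix=(i,x_0,x_1,\dots)$. $\psi_1,\dots,\psi_t$ are affine bijections of $\mathbb{R}^d$ with $\max\mathrm{Lip}(\psi_i)<1$; $q\in\{1,\dots,d\}$; $(D\psi_i)_*$ is the pull-back on $q$-forms $\Lambda^q(\mathbb{R}^d)$ (inner product induced by the Euclidean one); $M^q$ = self-adjoint operators on $\Lambda^q$; $\Psi_i(A)={}^t(D\psi_i)_*A(D\psi_i)_*$, ${}^t\Psi_i(A)=(D\psi_i)_*A\,{}^t(D\psi_i)_*$. Assume $(ND_q)$: there is $\gamma>0$ such that for all $c,e\in\Lambda^q$ some $i$ has $|((D\psi_i)_*c,e)|\ge\gamma\|c\|\|e\|$. Then the operator $(\mathcal{L}_0A)(x)=\sum_{i=1}^t\Psi_i(A(ix))$ on $C(\Sigma,M^q)$ has a unique eigenvalue $\beta_0>0$ admitting an eigenfunction that is positive definite at every point. A periodic orbit $\tau$ is the set $\{x,\sigma(x),\dots,\sigma^{n-1}(x)\}$ of a point of minimal period $n=\lambda(\tau)$, and $\mathrm{tr}({}^t\Psi_\tau)=\mathrm{tr}({}^t\Psi_{x_0}\circ\dots\circ{}^t\Psi_{x_{n-1}})$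 for any $x\in\tau$ (independent of the choice). *)

theory Defs
  imports "HOL-Analysis.Analysis"
begin

text \<open>Sigma = {1..t}^N, realised as a subset of nat => nat (product topology
of the discrete nat, via the library instance for function spaces).\<close>

definition Sig :: "nat \<Rightarrow> (nat \<Rightarrow> nat) set" where
  "Sig t = {x. \<forall>n. x n \<in> {1..t}}"

definition shift :: "(nat \<Rightarrow> nat) \<Rightarrow> (nat \<Rightarrow> nat)" where
  "shift x = (\<lambda>n. x (Suc n))"

definition pcons :: "nat \<Rightarrow> (nat \<Rightarrow> nat) \<Rightarrow> (nat \<Rightarrow> nat)" where
  "pcons i x = case_nat i x"

section \<open>q-forms: coordinates in the orthonormal basis e^I, I a q-subset of the index type\<close>

definition qsets :: "nat \<Rightarrow> ('d::{finite,linorder}) set set" where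
  "qsets q = {I. card I = q}"

text \<open>Linear part (derivative) of an affine map.\<close>
definition Dlin :: "(real^('d::{finite,linorder}) \<Rightarrow> real^('d::{finite,linorder})) \<Rightarrow> real^('d::{finite,linorder}) \<Rightarrow> real^('d::{finite,linorder})" where
  "Dlin f = (\<lambda>v. f v - f 0)"

definition affine_bij :: "(real^('d::{finite,linorder}) \<Rightarrow> real^('d::{finite,linorder})) \<Rightarrow> bool" where
  "affine_bij f \<longleftrightarrow> bij f \<and> (\<exists>L c. linear L \<and> f = (\<lambda>x. L x + c))"

text \<open>Minor det L[I,J] (rows I, columns J, both in increasing order), Leibniz formula.\<close>
definition minor :: "(real^('d::{finite,linorder}) \<Rightarrow> real^('d::{finite,linorder})) \<Rightarrow> ('d::{finite,linorder}) set \<Rightarrow> ('d::{finite,linorder}) set \<Rightarrow> real" where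
  "minor L I J = (let q = card I; rI = sorted_list_of_set I; cJ = sorted_list_of_set J in
     (\<Sum>p\<in>{p. p permutes {..<q}}. of_int (sign p) *
        (\<Prod>a<q. (L (axis (cJ ! p a) 1)) $ (rI ! a))))"

text \<open>Matrix of the pull-back L_* on q-forms: L_* e^I = sum_J det L[I,J] e^J,
  so the (J,I) entry is det L[I,J].\<close>
definition pullback :: "(real^('d::{finite,linorder}) \<Rightarrow> real^('d::{finite,linorder})) \<Rightarrow> ('d::{finite,linorder}) set \<Rightarrow> ('d::{finite,linorder}) set \<Rightarrow> real" where
  "pullback L J I = minor L I J"

definition qapply :: "nat \<Rightarrow> (('d::{finite,linorder}) set \<Rightarrow> ('d::{finite,linorder}) set \<Rightarrow> real) \<Rightarrow> (('d::{finite,linorder}) set \<Rightarrow> real) \<Rightarrow> (('d::{finite,linorder}) set \<Rightarrow> real)" where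
  "qapply q P c = (\<lambda>J. \<Sum>I\<in>qsets q. P J I * c I)"

definition qinner :: "nat \<Rightarrow> (('d::{finite,linorder}) set \<Rightarrow> real) \<Rightarrow> (('d::{finite,linorder}) set \<Rightarrow> real) \<Rightarrow> real" where
  "qinner q c e = (\<Sum>J\<in>qsets q. c J * e J)"

definition qnorm :: "nat \<Rightarrow> (('d::{finite,linorder}) set \<Rightarrow> real) \<Rightarrow> real" where
  "qnorm q c = sqrt (qinner q c c)"

definition ND :: "nat \<Rightarrow> nat \<Rightarrow> (nat \<Rightarrow> real^('d::{finite,linorder}) \<Rightarrow> real^('d::{finite,linorder})) \<Rightarrow> ('d::{finite,linorder}) itself \<Rightarrow> bool" where
  "ND t q \<psi> _ \<longleftrightarrow> (\<exists>\<gamma>>0. \<forall>(c::('d::{finite,linorder}) set \<Rightarrow> real) e. \<exists>i\<in>{1..t}.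
      \<bar>qinner q (qapply q (pullback (Dlin (\<psi> i))) c) e\<bar> \<ge> \<gamma> * qnorm q c * qnorm q e)"

section \<open>Operators on M^q (self-adjoint operators on Lambda^q, as symmetric matrices)\<close>

type_synonym 'd qmat = "('d::{finite,linorder}) set \<Rightarrow> ('d::{finite,linorder}) set \<Rightarrow> real"

definition qsym :: "nat \<Rightarrow> ('d::{finite,linorder}) qmat \<Rightarrow> bool" where
  "qsym q A \<longleftrightarrow> (\<forall>I\<in>qsets q. \<forall>J\<in>qsets q. A I J = A J I)"

definition qposdef :: "nat \<Rightarrow> ('d::{finite,linorder}) qmat \<Rightarrow> bool" where
  "qposdef q A \<longleftrightarrow> qsym q A \<and>
     (\<forall>c. (\<exists>I\<in>qsets q. c I \<noteq> 0) \<longrightarrow> (\<Sum>I\<in>qsets q. \<Sum>J\<in>qsets q. c I * A I J * c J) > 0)"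

definition PsiOp :: "nat \<Rightarrow> (real^('d::{finite,linorder}) \<Rightarrow> real^('d::{finite,linorder})) \<Rightarrow> (('d::{finite,linorder})) qmat \<Rightarrow> ('d::{finite,linorder}) qmat" where
  "PsiOp q f A = (let P = pullback (Dlin f) in
     (\<lambda>I J. \<Sum>K\<in>qsets q. \<Sum>L\<in>qsets q. P K I * A K L * P L J))"

definition tPsiOp :: "nat \<Rightarrow> (real^('d::{finite,linorder}) \<Rightarrow> real^('d::{finite,linorder})) \<Rightarrow> (('d::{finite,linorder})) qmat \<Rightarrow> ('d::{finite,linorder}) qmat" where
  "tPsiOp q f A = (let P = pullback (Dlin f) in
     (\<lambda>I J. \<Sum>K\<in>qsets q. \<Sum>L\<in>qsets q. P I K * A K L * P J L))"

definition L0 :: "nat \<Rightarrow> nat \<Rightarrow> (nat \<Rightarrow> real^('d::{finite,linorder}) \<Rightarrow> real^('d::{finite,linorder})) \<Rightarrow> ((nat \<Rightarrow> nat) \<Rightarrow> (('d::{finite,linorder})) qmat)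
     \<Rightarrow> (nat \<Rightarrow> nat) \<Rightarrow> ('d::{finite,linorder}) qmat" where
  "L0 t q \<psi> A x = (\<lambda>I J. \<Sum>i=1..t. PsiOp q (\<psi> i) (A (pcons i x)) I J)"

definition pos_eigen :: "nat \<Rightarrow> nat \<Rightarrow> (nat \<Rightarrow> real^('d::{finite,linorder}) \<Rightarrow> real^('d::{finite,linorder})) \<Rightarrow> ('d::{finite,linorder}) itself \<Rightarrow> real \<Rightarrow> bool" where
  "pos_eigen t q \<psi> _ \<beta> \<longleftrightarrow> (\<exists>A :: (nat \<Rightarrow> nat) \<Rightarrow> ('d::{finite,linorder}) qmat.
      (\<forall>I\<in>qsets q. \<forall>J\<in>qsets q. continuous_on (Sig t) (\<lambda>x. A x I J)) \<and>
      (\<forall>x\<in>Sig t. qposdef q (A x)) \<and>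
      (\<forall>x\<in>Sig t. \<forall>I\<in>qsets q. \<forall>J\<in>qsets q. L0 t q \<psi> A x I J = \<beta> * A x I J))"

text \<open>Orthonormal basis of M^q (Frobenius inner product), indexed by the sets {I,J}.\<close>
definition symbasis :: "('d::{finite,linorder}) set set \<Rightarrow> (('d::{finite,linorder})) qmat" where
  "symbasis s = (\<lambda>K L. if {K, L} = s then (if K = L then 1 else 1 / sqrt 2) else 0)"

definition frob :: "nat \<Rightarrow> ('d::{finite,linorder}) qmat \<Rightarrow> ('d::{finite,linorder}) qmat \<Rightarrow> real" where
  "frob q A B = (\<Sum>K\<in>qsets q. \<Sum>L\<in>qsets q. A K L * B K L)"

definition Mtrace :: "nat \<Rightarrow> (('d::{finite,linorder}) qmat \<Rightarrow> ('d::{finite,linorder}) qmat) \<Rightarrow> real" where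
  "Mtrace q T = (\<Sum>s\<in>{{K, L} | K L. K \<in> qsets q \<and> L \<in> qsets q}.
      frob q (symbasis s) (T (symbasis s)))"

primrec tPsiWord :: "nat \<Rightarrow> (nat \<Rightarrow> real^('d::{finite,linorder}) \<Rightarrow> real^('d::{finite,linorder})) \<Rightarrow> (nat \<Rightarrow> nat) \<Rightarrow> nat
     \<Rightarrow> (('d::{finite,linorder})) qmat \<Rightarrow> ('d::{finite,linorder}) qmat" where
  "tPsiWord q \<psi> x 0 A = A"
| "tPsiWord q \<psi> x (Suc n) A = tPsiOp q (\<psi> (x 0)) (tPsiWord q \<psi> (shift x) n A)"

definition min_period :: "(nat \<Rightarrow> nat) \<Rightarrow> nat" where
  "min_period x = (LEAST n. n > 0 \<and> (shift ^^ n) x = x)"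

definition per_orbits :: "nat \<Rightarrow> (nat \<Rightarrow> nat) set set" where
  "per_orbits t = {{(shift ^^ k) x | k. k < min_period x} | x.
      x \<in> Sig t \<and> (\<exists>n>0. (shift ^^ n) x = x)}"

definition orb_rep :: "(nat \<Rightarrow> nat) set \<Rightarrow> nat \<Rightarrow> nat" where
  "orb_rep \<tau> = (SOME x. x \<in> \<tau>)"

definition orb_len :: "(nat \<Rightarrow> nat) set \<Rightarrow> nat" where
  "orb_len \<tau> = min_period (orb_rep \<tau>)"

definition orb_trace :: "nat \<Rightarrow> (nat \<Rightarrow> real^('d::{finite,linorder}) \<Rightarrow> real^('d::{finite,linorder})) \<Rightarrow> ('d::{finite,linorder}) itself
     \<Rightarrow> (nat \<Rightarrow> nat) set \<Rightarrow> real" where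
  "orb_trace q \<psi> _ \<tau> = Mtrace q (tPsiWord q \<psi> (orb_rep \<tau>) (orb_len \<tau>) :: ('d::{finite,linorder}) qmat \<Rightarrow> ('d::{finite,linorder}) qmat)"

definition pi' :: "nat \<Rightarrow> nat \<Rightarrow> (nat \<Rightarrow> real^('d::{finite,linorder}) \<Rightarrow> real^('d::{finite,linorder})) \<Rightarrow> ('d::{finite,linorder}) itself \<Rightarrow> real \<Rightarrow> real" where
  "pi' t q \<psi> D y = (\<Sum>\<tau>\<in>{\<tau>\<in>per_orbits t. real (orb_len \<tau>) \<le> y}. orb_trace q \<psi> D \<tau>)"

end

theory Submission imports Defs begin

lemma compact_Sig: "compact (Sig t)"
proof -
  have "Sig t = PiE UNIV (\<lambda>_. {1..t})" unfolding Sig_def PiE_def Pi_def extensional_def by auto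
  moreover have "compactin (product_topology (\<lambda>_. euclidean) UNIV) (PiE UNIV (\<lambda>_::nat. {1..t::nat}))"
    unfolding compactin_PiE by (simp add: finite_imp_compact)
  ultimately show ?thesis unfolding euclidean_product_topology by simp
qed

lemma norm_sq_vec: "(norm (u::real^'k))^2 = (\<Sum>K\<in>UNIV. (u$K)^2)"
  unfolding norm_vec_def L2_set_def by (simp add: sum_nonneg)

lemma quad_lower:
  fixes A :: "(nat \<Rightarrow> nat) \<Rightarrow> 'k::finite \<Rightarrow> 'k \<Rightarrow> real" and Q :: "'k set"
  assumes cont: "\<forall>I\<in>Q. \<forall>J\<in>Q. continuous_on S (\<lambda>x. A x I J)"
    and pd: "\<forall>x\<in>S. \<forall>c. (\<exists>I\<in>Q. c I \<noteq> 0) \<longrightarrow> (\<Sum>I\<in>Q. \<Sum>J\<in>Q. c I * A x I J * c J) > 0"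
    and S: "compact S" "S \<noteq> {}" and Q: "Q \<noteq> {}"
  shows "\<exists>c>0. \<forall>y\<in>S. \<forall>v. (\<Sum>I\<in>Q. \<Sum>J\<in>Q. v I * A y I J * v J) \<ge> c * (\<Sum>I\<in>Q. (v I)^2)"
proof -
  define U where "U = {u::real^'k. norm u = 1 \<and> (\<forall>K. K \<notin> Q \<longrightarrow> u$K = 0)}"
  have "U = sphere 0 1 \<inter> (\<Inter>K\<in>-Q. {u. u$K = 0})" unfolding U_def by auto
  moreover have "closed (\<Inter>K\<in>-Q. {u::real^'k. u$K = 0})"
    by (intro closed_INT ballI closed_Collect_eq continuous_intros)
  ultimately have cU: "compact U" by (simp add: compact_Int_closed)
  obtain K0 where K0: "K0 \<in> Q" using Q by auto
  have "axis K0 1 \<in> U" unfolding U_def using K0 norm_axis_1[of K0] by (auto simp: axis_def simp del: norm_axis_1)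
  then have ne: "S \<times> U \<noteq> {}" using S by auto
  define g where "g = (\<lambda>p::(nat\<Rightarrow>nat) \<times> (real^'k). \<Sum>I\<in>Q. \<Sum>J\<in>Q. snd p $ I * A (fst p) I J * snd p $ J)"
  have cA: "continuous_on (S \<times> U) (\<lambda>p. A (fst p) I J)" if "I \<in> Q" "J \<in> Q" for I J
    using continuous_on_compose2[OF cont[rule_format, OF that] continuous_on_fst[OF continuous_on_id], of "S \<times> U"] by auto
  have "continuous_on (S \<times> U) g" unfolding g_def
    by (intro continuous_intros cA) auto
  then obtain p0 where p0: "p0 \<in> S \<times> U" "\<forall>p\<in>S \<times> U. g p0 \<le> g p"
    using continuous_attains_inf[OF compact_Times[OF S(1) cU] ne] by blast
  have "\<exists>I\<in>Q. snd p0 $ I \<noteq> 0"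
  proof (rule ccontr)
    assume "\<not> ?thesis"
    then have "\<forall>K. snd p0 $ K = 0" using p0(1) unfolding U_def by auto
    then have "snd p0 = 0" by (simp add: vec_eq_iff)
    then show False using p0(1) unfolding U_def by auto
  qed
  then have gpos: "g p0 > 0" unfolding g_def using pd[rule_format, of "fst p0" "\<lambda>K. snd p0 $ K"] p0(1) by auto
  show ?thesis
  proof (intro exI[of _ "g p0"] conjI gpos ballI allI)
    fix y and v :: "'k \<Rightarrow> real" assume y: "y \<in> S"
    define s where "s = (\<Sum>I\<in>Q. (v I)^2)"
    show "(\<Sum>I\<in>Q. \<Sum>J\<in>Q. v I * A y I J * v J) \<ge> g p0 * s"
    proof (cases "s = 0")
      case True
      have "\<forall>I\<in>Q. v I = 0" using True unfolding s_def
        by (subst (asm) sum_nonneg_eq_0_iff) auto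
      then show ?thesis using True by simp
    next
      case False
      have s0: "s > 0" using False unfolding s_def by (metis less_eq_real_def sum_nonneg zero_le_power2)
      define r where "r = sqrt s"
      have r0: "r > 0" and rr: "r^2 = s" using s0 unfolding r_def by auto
      define u where "u = (\<chi> K. if K \<in> Q then v K / r else 0)"
      have "(norm u)^2 = (\<Sum>K\<in>UNIV. (u$K)^2)" by (rule norm_sq_vec)
      also have "\<dots> = (\<Sum>K\<in>Q. (v K / r)^2)"
        unfolding u_def by (simp add: if_distrib[of "\<lambda>z. z^2"] sum.If_cases Int_absorb1)
      also have "\<dots> = s / r^2" unfolding s_def by (simp add: power_divide sum_divide_distrib)
      also have "\<dots> = 1" using rr s0 by simp
      finally have "norm u = 1" using norm_ge_zero[of u] by (auto simp add: power2_eq_1_iff)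
      then have uU: "u \<in> U" unfolding U_def u_def by auto
      have "g (y, u) = (\<Sum>I\<in>Q. \<Sum>J\<in>Q. v I * A y I J * v J) / r^2"
        unfolding g_def u_def by (simp add: sum_divide_distrib power2_eq_square)
      moreover have "g p0 \<le> g (y, u)" using p0(2) y uU by auto
      ultimately have "g p0 * r^2 \<le> (\<Sum>I\<in>Q. \<Sum>J\<in>Q. v I * A y I J * v J)"
        using r0 by (simp add: pos_le_divide_eq)
      then show ?thesis using rr by simp
    qed
  qed
qed


definition mm :: "'k set \<Rightarrow> ('k \<Rightarrow> 'k \<Rightarrow> real) \<Rightarrow> ('k \<Rightarrow> 'k \<Rightarrow> real) \<Rightarrow> 'k \<Rightarrow> 'k \<Rightarrow> real" where
  "mm Q A B = (\<lambda>I J. \<Sum>K\<in>Q. A I K * B K J)"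

definition trp :: "('k \<Rightarrow> 'k \<Rightarrow> real) \<Rightarrow> 'k \<Rightarrow> 'k \<Rightarrow> real" where
  "trp A = (\<lambda>I J. A J I)"

definition idm :: "'k \<Rightarrow> 'k \<Rightarrow> real" where
  "idm = (\<lambda>I J. if I = J then 1 else 0)"

fun PWl :: "'k set \<Rightarrow> (nat \<Rightarrow> 'k \<Rightarrow> 'k \<Rightarrow> real) \<Rightarrow> nat list \<Rightarrow> 'k \<Rightarrow> 'k \<Rightarrow> real" where
  "PWl Q Pm [] = idm"
| "PWl Q Pm (i # w) = mm Q (Pm i) (PWl Q Pm w)"

lemma mm_assoc: "mm Q (mm Q A B) C = mm Q A (mm Q B C)"
  unfolding mm_def
  apply (rule ext)+
  apply (simp add: sum_distrib_right sum_distrib_left mult.assoc)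
  apply (rule sum.swap)
  done

lemma trp_mm: "trp (mm Q A B) = mm Q (trp B) (trp A)"
  unfolding mm_def trp_def by (simp add: mult.commute)

lemma trp_trp[simp]: "trp (trp A) = A" unfolding trp_def by simp

lemma mm_cong_mid: "(\<forall>K\<in>Q. \<forall>L\<in>Q. B K L = B' K L) \<Longrightarrow> mm Q (mm Q X B) Y = mm Q (mm Q X B') Y"
  unfolding mm_def by simp

lemma sum_swap3: "(\<Sum>i\<in>A. \<Sum>j\<in>B. \<Sum>k\<in>C. f i j k) = (\<Sum>k\<in>C. \<Sum>j\<in>B. \<Sum>i\<in>A. f i j k)"
proof -
  have "(\<Sum>i\<in>A. \<Sum>j\<in>B. \<Sum>k\<in>C. f i j k) = (\<Sum>j\<in>B. \<Sum>i\<in>A. \<Sum>k\<in>C. f i j k)" by (rule sum.swap)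
  also have "\<dots> = (\<Sum>j\<in>B. \<Sum>k\<in>C. \<Sum>i\<in>A. f i j k)" by (rule sum.cong[OF refl], rule sum.swap)
  also have "\<dots> = (\<Sum>k\<in>C. \<Sum>j\<in>B. \<Sum>i\<in>A. f i j k)" by (rule sum.swap)
  finally show ?thesis .
qed

lemma sum_swap3b: "(\<Sum>i\<in>A. \<Sum>k\<in>C. \<Sum>j\<in>B. f i j k) = (\<Sum>k\<in>C. \<Sum>j\<in>B. \<Sum>i\<in>A. f i j k)"
proof -
  have "(\<Sum>i\<in>A. \<Sum>k\<in>C. \<Sum>j\<in>B. f i j k) = (\<Sum>k\<in>C. \<Sum>i\<in>A. \<Sum>j\<in>B. f i j k)" by (rule sum.swap)
  also have "\<dots> = (\<Sum>k\<in>C. \<Sum>j\<in>B. \<Sum>i\<in>A. f i j k)" by (rule sum.cong[OF refl], rule sum.swap)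
  finally show ?thesis .
qed

lemma mm_sum_mid: "(\<Sum>i\<in>S. mm Q (mm Q X (B i)) Y I J) = mm Q (mm Q X (\<lambda>K L. \<Sum>i\<in>S. B i K L)) Y I J"
  unfolding mm_def sum_distrib_right sum_distrib_left by (rule sum_swap3b)

lemma mm_scale_mid: "mm Q (mm Q X (\<lambda>K L. c * B K L)) Y I J = c * mm Q (mm Q X B) Y I J"
  unfolding mm_def by (simp add: sum_distrib_right sum_distrib_left mult_ac)

lemma PsiOp_eq: "PsiOp q f B = mm (qsets q) (mm (qsets q) (trp (pullback (Dlin f))) B) (pullback (Dlin f))"
  unfolding PsiOp_def mm_def trp_def Let_def
  apply (rule ext)+
  apply (simp add: sum_distrib_right)
  apply (rule sum.swap)
  done

lemma tPsiOp_eq: "tPsiOp q f B = mm (qsets q) (mm (qsets q) (pullback (Dlin f)) B) (trp (pullback (Dlin f)))"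
  unfolding tPsiOp_def mm_def trp_def Let_def
  apply (rule ext)+
  apply (simp add: sum_distrib_right)
  apply (rule sum.swap)
  done

lemma finite_qsets[simp]: "finite (qsets q :: ('d::{finite,linorder}) set set)"
  by (rule finite_subset[OF subset_UNIV]) simp

lemma ifmult: "(if P then (1::real) else 0) * x = (if P then x else 0)" "x * (if P then (1::real) else 0) = (if P then x else 0)"
  by simp_all

lemma mm_idm: "finite Q \<Longrightarrow> I \<in> Q \<Longrightarrow> J \<in> Q \<Longrightarrow> mm Q (mm Q idm E) (trp idm) I J = E I J"
  "finite Q \<Longrightarrow> I \<in> Q \<Longrightarrow> J \<in> Q \<Longrightarrow> mm Q (mm Q (trp idm) E) idm I J = E I J"
  unfolding mm_def idm_def trp_def by (simp_all add: ifmult sum.delta sum.delta')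

lemma TW:
  fixes \<psi> :: "nat \<Rightarrow> real^('d::{finite,linorder}) \<Rightarrow> real^('d::{finite,linorder})"
  shows "\<forall>I\<in>qsets q. \<forall>J\<in>qsets q. tPsiWord q \<psi> x n E I J =
    mm (qsets q) (mm (qsets q) (PWl (qsets q) (\<lambda>i. pullback (Dlin (\<psi> i))) (map x [0..<n])) E)
       (trp (PWl (qsets q) (\<lambda>i. pullback (Dlin (\<psi> i))) (map x [0..<n]))) I J"
proof (induction n arbitrary: x)
  case 0
  then show ?case by (simp add: mm_idm)
next
  case (Suc n)
  let ?Q = "qsets q :: 'd set set"
  let ?Pm = "\<lambda>i. pullback (Dlin (\<psi> i))"
  let ?R = "PWl ?Q ?Pm (map (shift x) [0..<n])"
  have sx: "shift x = (\<lambda>i. x (Suc i))" unfolding shift_def by simp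
  have "tPsiWord q \<psi> x (Suc n) E = mm ?Q (mm ?Q (?Pm (x 0)) (tPsiWord q \<psi> (shift x) n E)) (trp (?Pm (x 0)))"
    by (simp add: tPsiOp_eq)
  also have "\<dots> = mm ?Q (mm ?Q (?Pm (x 0)) (mm ?Q (mm ?Q ?R E) (trp ?R))) (trp (?Pm (x 0)))"
    by (rule mm_cong_mid) (use Suc.IH[of "shift x"] in auto)
  also have "\<dots> = mm ?Q (mm ?Q (mm ?Q (?Pm (x 0)) ?R) E) (trp (mm ?Q (?Pm (x 0)) ?R))"
    by (simp add: mm_assoc trp_mm)
  finally have eq: "tPsiWord q \<psi> x (Suc n) E = mm ?Q (mm ?Q (mm ?Q (?Pm (x 0)) ?R) E) (trp (mm ?Q (?Pm (x 0)) ?R))" .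
  show ?case unfolding map_upt_Suc PWl.simps sx[symmetric] eq[symmetric] by simp
qed


definition Wd :: "nat \<Rightarrow> nat \<Rightarrow> nat list set" where
  "Wd t n = {w. set w \<subseteq> {1..t} \<and> length w = n}"

definition app :: "nat list \<Rightarrow> (nat \<Rightarrow> nat) \<Rightarrow> (nat \<Rightarrow> nat)" where
  "app w x = foldr pcons w x"

lemma pcons_Sig: "i \<in> {1..t} \<Longrightarrow> x \<in> Sig t \<Longrightarrow> pcons i x \<in> Sig t"
  unfolding Sig_def pcons_def by (auto split: nat.split)

lemma app_Sig: "set w \<subseteq> {1..t} \<Longrightarrow> x \<in> Sig t \<Longrightarrow> app w x \<in> Sig t"
  by (induction w) (auto simp: app_def pcons_Sig)

lemma eig_iter:
  fixes A :: "(nat \<Rightarrow> nat) \<Rightarrow> 'k \<Rightarrow> 'k \<Rightarrow> real"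
  assumes fin: "finite Q"
    and eig: "\<forall>x\<in>Sig t. \<forall>I\<in>Q. \<forall>J\<in>Q. (\<Sum>i=1..t. mm Q (mm Q (trp (Pm i)) (A (pcons i x))) (Pm i) I J) = \<beta> * A x I J"
    and x: "x \<in> Sig t"
  shows "\<forall>I\<in>Q. \<forall>J\<in>Q. (\<Sum>w\<in>Wd t n. mm Q (mm Q (trp (PWl Q Pm w)) (A (app w x))) (PWl Q Pm w) I J) = \<beta>^n * A x I J"
proof (induction n)
  case 0
  have "Wd t 0 = {[]}" unfolding Wd_def by auto
  then show ?case using fin by (simp add: mm_idm app_def)
next
  case (Suc n)
  show ?case
  proof (intro ballI)
    fix I J assume IJ: "I \<in> Q" "J \<in> Q"
    let ?G = "\<lambda>w. mm Q (mm Q (trp (PWl Q Pm w)) (A (app w x))) (PWl Q Pm w) I J"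
    have W: "Wd t (Suc n) = (\<lambda>(xs, i). i # xs) ` (Wd t n \<times> {1..t})"
      unfolding Wd_def by (rule lists_length_Suc_eq)
    have inj: "inj_on (\<lambda>(xs, i). i # xs) (Wd t n \<times> {1..t})" by (auto simp: inj_on_def)
    have "(\<Sum>w\<in>Wd t (Suc n). ?G w) = (\<Sum>p\<in>Wd t n \<times> {1..t}. ?G ((\<lambda>(xs, i). i # xs) p))"
      unfolding W by (rule sum.reindex[OF inj, unfolded comp_def])
    also have "\<dots> = (\<Sum>w\<in>Wd t n. \<Sum>i\<in>{1..t}. ?G (i # w))"
      by (simp add: sum.cartesian_product split_def)
    also have "\<dots> = (\<Sum>w\<in>Wd t n. \<beta> * mm Q (mm Q (trp (PWl Q Pm w)) (A (app w x))) (PWl Q Pm w) I J)"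
    proof (rule sum.cong[OF refl])
      fix w assume w: "w \<in> Wd t n"
      let ?R = "PWl Q Pm w"
      let ?y = "app w x"
      have y: "?y \<in> Sig t" using w x app_Sig unfolding Wd_def by auto
      have "?G (i # w) = mm Q (mm Q (trp ?R) (mm Q (mm Q (trp (Pm i)) (A (pcons i ?y))) (Pm i))) ?R I J" for i
        by (simp add: app_def trp_mm mm_assoc)
      then have "(\<Sum>i\<in>{1..t}. ?G (i # w)) = (\<Sum>i\<in>{1..t}. mm Q (mm Q (trp ?R) (mm Q (mm Q (trp (Pm i)) (A (pcons i ?y))) (Pm i))) ?R I J)"
        by simp
      also have "\<dots> = mm Q (mm Q (trp ?R) (\<lambda>K L. \<Sum>i\<in>{1..t}. mm Q (mm Q (trp (Pm i)) (A (pcons i ?y))) (Pm i) K L)) ?R I J"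
        by (rule mm_sum_mid)
      also have "\<dots> = mm Q (mm Q (trp ?R) (\<lambda>K L. \<beta> * A ?y K L)) ?R I J"
        by (subst mm_cong_mid[where B' = "\<lambda>K L. \<beta> * A ?y K L"]) (use eig y in auto)
      also have "\<dots> = \<beta> * mm Q (mm Q (trp ?R) (A ?y)) ?R I J" by (rule mm_scale_mid)
      finally show "(\<Sum>i\<in>{1..t}. ?G (i # w)) = \<beta> * mm Q (mm Q (trp ?R) (A ?y)) ?R I J" .
    qed
    also have "\<dots> = \<beta> * (\<Sum>w\<in>Wd t n. ?G w)" by (simp add: sum_distrib_left)
    also have "\<dots> = \<beta>^(Suc n) * A x I J" using Suc.IH IJ by simp
    finally show "(\<Sum>w\<in>Wd t (Suc n). ?G w) = \<beta>^(Suc n) * A x I J" .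
  qed
qed

lemma tr_lower:
  assumes qf: "\<forall>v. (\<Sum>I\<in>Q. \<Sum>J\<in>Q. v I * B I J * v J) \<ge> c * (\<Sum>I\<in>Q. (v I)^2)"
  shows "(\<Sum>J\<in>Q. mm Q (mm Q (trp R) B) R J J) \<ge> c * (\<Sum>K\<in>Q. \<Sum>J\<in>Q. (R K J)^2)"
proof -
  have e: "mm Q (mm Q (trp R) B) R J J = (\<Sum>K\<in>Q. \<Sum>L\<in>Q. R K J * B K L * R L J)" for J
    unfolding mm_def trp_def sum_distrib_right by (rule sum.swap)
  have "(\<Sum>K\<in>Q. \<Sum>L\<in>Q. R K J * B K L * R L J) \<ge> c * (\<Sum>K\<in>Q. (R K J)^2)" for J
    using qf[rule_format, of "\<lambda>K. R K J"] by simp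
  then have "(\<Sum>J\<in>Q. mm Q (mm Q (trp R) B) R J J) \<ge> (\<Sum>J\<in>Q. c * (\<Sum>K\<in>Q. (R K J)^2))"
    unfolding e by (intro sum_mono) auto
  also have "(\<Sum>J\<in>Q. c * (\<Sum>K\<in>Q. (R K J)^2)) = c * (\<Sum>K\<in>Q. \<Sum>J\<in>Q. (R K J)^2)"
    by (simp add: sum_distrib_left) (rule sum.swap)
  finally show ?thesis .
qed

lemma mm_abs_bound:
  assumes E: "\<forall>M N. \<bar>E M N\<bar> \<le> 1"
  shows "\<bar>mm Q (mm Q R E) (trp R) K L\<bar> \<le> (\<Sum>M\<in>Q. \<bar>R K M\<bar>) * (\<Sum>N\<in>Q. \<bar>R L N\<bar>)"
proof -
  have "\<bar>mm Q (mm Q R E) (trp R) K L\<bar> = \<bar>\<Sum>N\<in>Q. (\<Sum>M\<in>Q. R K M * E M N) * R L N\<bar>"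
    unfolding mm_def trp_def by simp
  also have "\<dots> \<le> (\<Sum>N\<in>Q. \<bar>(\<Sum>M\<in>Q. R K M * E M N) * R L N\<bar>)" by (rule sum_abs)
  also have "\<dots> \<le> (\<Sum>N\<in>Q. (\<Sum>M\<in>Q. \<bar>R K M\<bar>) * \<bar>R L N\<bar>)"
  proof (rule sum_mono)
    fix N
    have "\<bar>\<Sum>M\<in>Q. R K M * E M N\<bar> \<le> (\<Sum>M\<in>Q. \<bar>R K M * E M N\<bar>)" by (rule sum_abs)
    also have "\<dots> \<le> (\<Sum>M\<in>Q. \<bar>R K M\<bar>)"
      by (rule sum_mono) (simp add: abs_mult mult_left_le E)
    finally show "\<bar>(\<Sum>M\<in>Q. R K M * E M N) * R L N\<bar> \<le> (\<Sum>M\<in>Q. \<bar>R K M\<bar>) * \<bar>R L N\<bar>"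
      by (simp add: abs_mult mult_right_mono)
  qed
  also have "\<dots> = (\<Sum>M\<in>Q. \<bar>R K M\<bar>) * (\<Sum>N\<in>Q. \<bar>R L N\<bar>)" by (simp add: sum_distrib_left)
  finally show ?thesis .
qed

lemma symbasis_le: "\<bar>symbasis s K L\<bar> \<le> 1"
proof -
  have "1 / sqrt 2 \<le> (1::real)" by (simp add: divide_le_eq)
  then show ?thesis unfolding symbasis_def by auto
qed

lemma Mtrace_bound:
  fixes T :: "(('d::{finite,linorder}) set \<Rightarrow> 'd set \<Rightarrow> real) \<Rightarrow> 'd set \<Rightarrow> 'd set \<Rightarrow> real"
  assumes TR: "\<forall>E. \<forall>I\<in>qsets q. \<forall>J\<in>qsets q. T E I J = mm (qsets q) (mm (qsets q) R E) (trp R) I J"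
  shows "\<bar>Mtrace q T\<bar> \<le> real (card (qsets q :: 'd set set))^4 * (\<Sum>K\<in>qsets q. \<Sum>J\<in>qsets q. (R K J)^2)"
proof -
  let ?Q = "qsets q :: 'd set set"
  define S where "S = {{K, L} | K L. K \<in> ?Q \<and> L \<in> ?Q}"
  have S: "S = (\<lambda>(K, L). {K, L}) ` (?Q \<times> ?Q)" unfolding S_def by auto
  have finS: "finite S" unfolding S by simp
  have cS: "card S \<le> card ?Q * card ?Q" unfolding S
    using card_image_le[of "?Q \<times> ?Q" "\<lambda>(K, L). {K, L}"] by (simp add: card_cartesian_product)
  define a where "a = (\<Sum>K\<in>?Q. \<Sum>M\<in>?Q. \<bar>R K M\<bar>)"
  define F where "F = (\<Sum>K\<in>?Q. \<Sum>J\<in>?Q. (R K J)^2)"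
  have a0: "a \<ge> 0" unfolding a_def by (simp add: sum_nonneg)
  have F0: "F \<ge> 0" unfolding F_def by (simp add: sum_nonneg)
  have fb: "\<bar>frob q (symbasis s) (T (symbasis s))\<bar> \<le> a * a" for s
  proof -
    let ?E = "symbasis s :: 'd set \<Rightarrow> 'd set \<Rightarrow> real"
    have "\<bar>frob q ?E (T ?E)\<bar> \<le> (\<Sum>K\<in>?Q. \<bar>\<Sum>L\<in>?Q. ?E K L * T ?E K L\<bar>)"
      unfolding frob_def by (rule sum_abs)
    also have "\<dots> \<le> (\<Sum>K\<in>?Q. \<Sum>L\<in>?Q. (\<Sum>M\<in>?Q. \<bar>R K M\<bar>) * (\<Sum>N\<in>?Q. \<bar>R L N\<bar>))"
    proof (rule sum_mono)
      fix K assume K: "K \<in> ?Q"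
      have "\<bar>\<Sum>L\<in>?Q. ?E K L * T ?E K L\<bar> \<le> (\<Sum>L\<in>?Q. \<bar>?E K L * T ?E K L\<bar>)" by (rule sum_abs)
      also have "\<dots> \<le> (\<Sum>L\<in>?Q. (\<Sum>M\<in>?Q. \<bar>R K M\<bar>) * (\<Sum>N\<in>?Q. \<bar>R L N\<bar>))"
      proof (rule sum_mono)
        fix L assume L: "L \<in> ?Q"
        have "\<bar>?E K L * T ?E K L\<bar> \<le> \<bar>T ?E K L\<bar>"
          by (simp add: abs_mult mult_left_le_one_le symbasis_le)
        also have "\<dots> = \<bar>mm ?Q (mm ?Q R ?E) (trp R) K L\<bar>" using TR K L by simp
        also have "\<dots> \<le> (\<Sum>M\<in>?Q. \<bar>R K M\<bar>) * (\<Sum>N\<in>?Q. \<bar>R L N\<bar>)"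
          by (rule mm_abs_bound) (simp add: symbasis_le)
        finally show "\<bar>?E K L * T ?E K L\<bar> \<le> (\<Sum>M\<in>?Q. \<bar>R K M\<bar>) * (\<Sum>N\<in>?Q. \<bar>R L N\<bar>)" .
      qed
      finally show "\<bar>\<Sum>L\<in>?Q. ?E K L * T ?E K L\<bar> \<le> (\<Sum>L\<in>?Q. (\<Sum>M\<in>?Q. \<bar>R K M\<bar>) * (\<Sum>N\<in>?Q. \<bar>R L N\<bar>))" .
    qed
    also have "\<dots> = a * a" by (simp only: a_def sum_product)
    finally show ?thesis .
  qed
  have "\<bar>Mtrace q T\<bar> \<le> (\<Sum>s\<in>S. \<bar>frob q (symbasis s) (T (symbasis s))\<bar>)"
    unfolding Mtrace_def S_def[symmetric] by (rule sum_abs)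
  also have "\<dots> \<le> (\<Sum>s\<in>S. a * a)" by (rule sum_mono) (rule fb)
  also have "\<dots> = real (card S) * (a * a)" by simp
  also have "\<dots> \<le> real (card ?Q * card ?Q) * (a * a)"
    by (rule mult_right_mono) (use cS a0 in \<open>simp_all add: of_nat_mult[symmetric] del: of_nat_mult\<close>)
  finally have m1: "\<bar>Mtrace q T\<bar> \<le> real (card ?Q * card ?Q) * (a * a)" .
  have "a = (\<Sum>p\<in>?Q \<times> ?Q. \<bar>R (fst p) (snd p)\<bar> * 1)"
    unfolding a_def by (simp add: sum.cartesian_product split_def)
  then have "a^2 \<le> (\<Sum>p\<in>?Q \<times> ?Q. (\<bar>R (fst p) (snd p)\<bar>)^2) * (\<Sum>p\<in>?Q \<times> ?Q. 1^2)"
    using Cauchy_Schwarz_ineq_sum[of "\<lambda>p. \<bar>R (fst p) (snd p)\<bar>" "\<lambda>_. 1" "?Q \<times> ?Q"] by simp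
  also have "\<dots> = F * real (card ?Q * card ?Q)"
    unfolding F_def by (simp add: sum.cartesian_product split_def card_cartesian_product)
  finally have m2: "a * a \<le> F * real (card ?Q * card ?Q)" by (simp add: power2_eq_square)
  have "real (card ?Q * card ?Q) * (a * a) \<le> real (card ?Q * card ?Q) * (F * real (card ?Q * card ?Q))"
    by (rule mult_left_mono[OF m2]) simp
  also have "\<dots> = real (card ?Q)^4 * F" by (simp add: power_def mult_ac)
  finally have m3: "real (card ?Q * card ?Q) * (a * a) \<le> real (card ?Q)^4 * F" .
  show ?thesis using order_trans[OF m1 m3] by (simp add: F_def)
qed


lemma shift_pow: "(shift ^^ k) x = (\<lambda>m. x (m + k))"
  by (induction k) (auto simp: shift_def)

lemma per_add: fixes x :: "nat \<Rightarrow> 'a" shows "(\<forall>m. x (m + p) = x m) \<Longrightarrow> x (m + p * j) = x m"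
proof (induction j)
  case (Suc j)
  have "x (m + p * Suc j) = x ((m + p * j) + p)" by (simp add: algebra_simps)
  also have "\<dots> = x (m + p * j)" using Suc.prems by blast
  finally show ?case using Suc by simp
qed simp

lemma per_mod: fixes x :: "nat \<Rightarrow> 'a" shows "(\<forall>m. x (m + p) = x m) \<Longrightarrow> x m = x (m mod p)"
  using per_add[of x p "m mod p" "m div p"] by (metis mod_mult_div_eq)

lemma min_period_props:
  assumes "\<exists>n>0. (shift ^^ n) x = x"
  shows "min_period x > 0" "\<forall>m. x (m + min_period x) = x m"
proof -
  have "min_period x > 0 \<and> (shift ^^ min_period x) x = x"
    unfolding min_period_def by (rule LeastI_ex) (use assms in auto)
  then show "min_period x > 0" "\<forall>m. x (m + min_period x) = x m"
    by (auto simp: shift_pow fun_eq_iff)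
qed

lemma orbit_full:
  assumes p: "p > 0" "\<forall>m. x (m + p) = x m"
  shows "{(shift ^^ k) x | k. k < p} = range (\<lambda>k. (shift ^^ k) x)"
proof -
  have "(shift ^^ k) x = (shift ^^ (k mod p)) x" for k
  proof -
    have "x (m + k) = x (m + k mod p)" for m
      using per_mod[OF p(2), of "m + k"] per_mod[OF p(2), of "m + k mod p"]
      by (simp add: mod_add_right_eq)
    then show ?thesis by (simp add: shift_pow)
  qed
  then show ?thesis using p(1) by auto (metis mod_less_divisor)
qed

lemma orb_struct:
  assumes "\<tau> \<in> per_orbits t"
  shows "orb_rep \<tau> \<in> Sig t" "orb_len \<tau> > 0" "\<forall>m. orb_rep \<tau> (m + orb_len \<tau>) = orb_rep \<tau> m"
    "\<tau> = range (\<lambda>k. (shift ^^ k) (orb_rep \<tau>))"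
proof -
  obtain x where x: "x \<in> Sig t" "\<exists>n>0. (shift ^^ n) x = x" "\<tau> = {(shift ^^ k) x | k. k < min_period x}"
    using assms unfolding per_orbits_def by auto
  let ?p = "min_period x"
  note mp = min_period_props[OF x(2)]
  have tau: "\<tau> = range (\<lambda>k. (shift ^^ k) x)" using x(3) orbit_full[OF mp] by simp
  have "x \<in> \<tau>" unfolding tau by (auto intro: range_eqI[of _ _ 0])
  then have "orb_rep \<tau> \<in> \<tau>" unfolding orb_rep_def using someI[of "\<lambda>z. z \<in> \<tau>" x] by blast
  then obtain a where a: "orb_rep \<tau> = (\<lambda>m. x (m + a))" unfolding tau by (auto simp: shift_pow)
  show "orb_rep \<tau> \<in> Sig t" using x(1) unfolding a Sig_def by auto
  have pr: "\<forall>m. orb_rep \<tau> (m + ?p) = orb_rep \<tau> m" unfolding a using mp(2)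
    by (metis add.assoc add.commute)
  have "(shift ^^ ?p) (orb_rep \<tau>) = orb_rep \<tau>" using pr by (simp add: shift_pow)
  then have ex: "\<exists>n>0. (shift ^^ n) (orb_rep \<tau>) = orb_rep \<tau>" using mp(1) by blast
  show "orb_len \<tau> > 0" "\<forall>m. orb_rep \<tau> (m + orb_len \<tau>) = orb_rep \<tau> m"
    unfolding orb_len_def using min_period_props[OF ex] by auto
  have "range (\<lambda>k. (shift ^^ k) (orb_rep \<tau>)) = range (\<lambda>k. (shift ^^ k) x)"
  proof
    show "range (\<lambda>k. (shift ^^ k) (orb_rep \<tau>)) \<subseteq> range (\<lambda>k. (shift ^^ k) x)"
    proof
      fix z assume "z \<in> range (\<lambda>k. (shift ^^ k) (orb_rep \<tau>))"
      then obtain k where "z = (\<lambda>m. x (m + k + a))" unfolding a by (auto simp: shift_pow)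
      then have "z = (shift ^^ (k + a)) x" by (simp add: shift_pow add.assoc)
      then show "z \<in> range (\<lambda>k. (shift ^^ k) x)" by blast
    qed
  next
    show "range (\<lambda>k. (shift ^^ k) x) \<subseteq> range (\<lambda>k. (shift ^^ k) (orb_rep \<tau>))"
    proof
      fix z assume "z \<in> range (\<lambda>k. (shift ^^ k) x)"
      then obtain k where z: "z = (\<lambda>m. x (m + k))" by (auto simp: shift_pow)
      define j where "j = k + (?p - 1) * a"
      have ja: "j + a = k + ?p * a" unfolding j_def using mp(1)
        by (cases ?p) (auto simp: algebra_simps)
      have "(shift ^^ j) (orb_rep \<tau>) = (\<lambda>m. x (m + k + ?p * a))"
        unfolding a shift_pow by (simp add: add.assoc ja)
      also have "\<dots> = z" unfolding z using per_add[OF mp(2)] by (simp add: add.assoc[symmetric])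
      finally show "z \<in> range (\<lambda>k. (shift ^^ k) (orb_rep \<tau>))" by (metis rangeI)
    qed
  qed
  then show "\<tau> = range (\<lambda>k. (shift ^^ k) (orb_rep \<tau>))" using tau by simp
qed

definition word :: "(nat \<Rightarrow> nat) set \<Rightarrow> nat list" where
  "word \<tau> = map (orb_rep \<tau>) [0..<orb_len \<tau>]"

lemma word_inj: "inj_on word (per_orbits t)"
proof (rule inj_onI)
  fix \<tau>1 \<tau>2 assume t1: "\<tau>1 \<in> per_orbits t" and t2: "\<tau>2 \<in> per_orbits t" and w: "word \<tau>1 = word \<tau>2"
  note s1 = orb_struct[OF t1] and s2 = orb_struct[OF t2]
  have L: "orb_len \<tau>1 = orb_len \<tau>2" using arg_cong[OF w, of length] unfolding word_def by simp
  have eq: "\<forall>m<orb_len \<tau>1. orb_rep \<tau>1 m = orb_rep \<tau>2 m"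
    using w unfolding word_def L map_eq_conv by auto
  have "orb_rep \<tau>1 m = orb_rep \<tau>2 m" for m
  proof -
    have "orb_rep \<tau>1 m = orb_rep \<tau>1 (m mod orb_len \<tau>1)" by (rule per_mod[OF s1(3)])
    also have "\<dots> = orb_rep \<tau>2 (m mod orb_len \<tau>1)" using eq s1(2) by simp
    also have "\<dots> = orb_rep \<tau>2 m" using per_mod[OF s2(3)] L by simp
    finally show ?thesis .
  qed
  then have "orb_rep \<tau>1 = orb_rep \<tau>2" by auto
  then show "\<tau>1 = \<tau>2" using s1(4) s2(4) by simp
qed

lemma word_in: "\<tau> \<in> per_orbits t \<Longrightarrow> word \<tau> \<in> Wd t (orb_len \<tau>)"
  using orb_struct(1)[of \<tau> t] unfolding Wd_def word_def Sig_def by auto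


lemma lim0:
  assumes b: "\<beta> > (1::real)" and g: "\<gamma>' > 1"
  shows "((\<lambda>y. C * \<beta> powr ((1 - \<gamma>') * y)) \<longlongrightarrow> 0) at_top"
proof -
  define k where "k = (1 - \<gamma>') * ln \<beta>"
  have k: "k < 0" unfolding k_def using b g by (simp add: mult_neg_pos)
  have "filterlim (\<lambda>y::real. k * y) at_bot at_top"
    by (rule filterlim_tendsto_neg_mult_at_bot[OF tendsto_const k filterlim_ident])
  then have "((\<lambda>y. exp (k * y)) \<longlongrightarrow> 0) at_top"
    by (rule filterlim_compose[OF exp_at_bot])
  then have "((\<lambda>y. C * exp (k * y)) \<longlongrightarrow> C * 0) at_top"
    by (intro tendsto_mult tendsto_const)
  moreover have "\<beta> powr ((1 - \<gamma>') * y) = exp (k * y)" for y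
    unfolding k_def powr_def using b by (simp add: mult_ac)
  ultimately show ?thesis by simp
qed

theorem lemma3p4:
  fixes t q :: nat and \<psi> :: "nat \<Rightarrow> real^('d::{finite,linorder}) \<Rightarrow> real^('d::{finite,linorder})"
    and \<beta> \<gamma>' :: real
  assumes aff: "\<forall>i\<in>{1..t}. affine_bij (\<psi> i)"
    and lip: "\<forall>i\<in>{1..t}. \<exists>C<1. C-lipschitz_on UNIV (\<psi> i)"
    and q: "1 \<le> q" "q \<le> CARD(('d::{finite,linorder}))"
    and nd: "ND t q \<psi> TYPE('d)"
    and beta0: "pos_eigen t q \<psi> TYPE('d) \<beta>"
    and beta1: "\<beta> > 1"
    and gam: "\<gamma>' > 1"
  shows "((\<lambda>y. pi' t q \<psi> TYPE('d) y / \<beta> powr (\<gamma>' * y)) \<longlongrightarrow> 0) at_top"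
proof (cases "t = 0")
  case True
  have "Sig t = {}" unfolding Sig_def using True by auto
  then have "per_orbits t = {}" unfolding per_orbits_def by auto
  then have "\<forall>y. pi' t q \<psi> TYPE('d) y = 0" unfolding pi'_def by simp
  then show ?thesis by simp
next
  case False
  let ?Q = "qsets q :: 'd set set"
  let ?Pm = "\<lambda>i. pullback (Dlin (\<psi> i))"
  define x0 where "x0 = (\<lambda>_::nat. 1::nat)"
  have x0: "x0 \<in> Sig t" using False unfolding x0_def Sig_def by auto
  obtain T0 :: "'d set" where "T0 \<subseteq> UNIV" "card T0 = q"
    using obtain_subset_with_card_n[of q "UNIV :: 'd set"] q(2) by auto
  then have Qne: "?Q \<noteq> {}" unfolding qsets_def by auto
  obtain A :: "(nat \<Rightarrow> nat) \<Rightarrow> 'd qmat" where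
    cont: "\<forall>I\<in>?Q. \<forall>J\<in>?Q. continuous_on (Sig t) (\<lambda>x. A x I J)" and
    pd: "\<forall>x\<in>Sig t. qposdef q (A x)" and
    eig: "\<forall>x\<in>Sig t. \<forall>I\<in>?Q. \<forall>J\<in>?Q. L0 t q \<psi> A x I J = \<beta> * A x I J"
    using beta0 unfolding pos_eigen_def by blast
  have pd': "\<forall>x\<in>Sig t. \<forall>c. (\<exists>I\<in>?Q. c I \<noteq> 0) \<longrightarrow> (\<Sum>I\<in>?Q. \<Sum>J\<in>?Q. c I * A x I J * c J) > 0"
    using pd unfolding qposdef_def by blast
  obtain c where c0: "c > 0" and
    qf: "\<forall>y\<in>Sig t. \<forall>v. (\<Sum>I\<in>?Q. \<Sum>J\<in>?Q. v I * A y I J * v J) \<ge> c * (\<Sum>I\<in>?Q. (v I)^2)"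
    using quad_lower[OF cont pd' compact_Sig _ Qne] x0 by blast
  have eig': "\<forall>x\<in>Sig t. \<forall>I\<in>?Q. \<forall>J\<in>?Q. (\<Sum>i=1..t. mm ?Q (mm ?Q (trp (?Pm i)) (A (pcons i x))) (?Pm i) I J) = \<beta> * A x I J"
    using eig unfolding L0_def PsiOp_eq by simp
  note it = eig_iter[OF finite_qsets eig' x0]
  define trA where "trA = (\<Sum>J\<in>?Q. A x0 J J)"
  define Fn where "Fn w = (\<Sum>K\<in>?Q. \<Sum>J\<in>?Q. (PWl ?Q ?Pm w K J)^2)" for w
  have Fn0: "Fn w \<ge> 0" for w unfolding Fn_def by (simp add: sum_nonneg)
  have sumF: "(\<Sum>w\<in>Wd t n. Fn w) \<le> \<beta>^n * (trA / c)" for n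
  proof -
    let ?G = "\<lambda>w. mm ?Q (mm ?Q (trp (PWl ?Q ?Pm w)) (A (app w x0))) (PWl ?Q ?Pm w)"
    have "c * (\<Sum>w\<in>Wd t n. Fn w) = (\<Sum>w\<in>Wd t n. c * Fn w)" by (simp add: sum_distrib_left)
    also have "\<dots> \<le> (\<Sum>w\<in>Wd t n. \<Sum>J\<in>?Q. ?G w J J)"
    proof (rule sum_mono)
      fix w assume "w \<in> Wd t n"
      then have "app w x0 \<in> Sig t" using app_Sig x0 unfolding Wd_def by auto
      then show "c * Fn w \<le> (\<Sum>J\<in>?Q. ?G w J J)" unfolding Fn_def
        by (intro tr_lower) (use qf in blast)
    qed
    also have "\<dots> = (\<Sum>J\<in>?Q. \<Sum>w\<in>Wd t n. ?G w J J)" by (rule sum.swap)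
    also have "\<dots> = (\<Sum>J\<in>?Q. \<beta>^n * A x0 J J)" using it[of n] by (intro sum.cong) auto
    also have "\<dots> = \<beta>^n * trA" by (simp add: trA_def sum_distrib_left)
    finally have "c * (\<Sum>w\<in>Wd t n. Fn w) \<le> \<beta>^n * trA" .
    then show ?thesis using c0 by (simp add: pos_le_divide_eq mult_ac)
  qed
  have K0: "trA / c \<ge> 0"
  proof -
    have "Wd t 0 = {[]}" unfolding Wd_def by auto
    then show ?thesis using sumF[of 0] Fn0[of "[]"] by simp
  qed
  define NQ4 where "NQ4 = real (card ?Q)^4"
  have NQ4: "NQ4 \<ge> 0" unfolding NQ4_def by simp
  have trb: "\<bar>orb_trace q \<psi> TYPE('d) \<tau>\<bar> \<le> NQ4 * Fn (word \<tau>)" for \<tau>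
    unfolding orb_trace_def NQ4_def Fn_def word_def by (intro Mtrace_bound allI TW)
  have K1: "NQ4 * (trA / c) \<ge> 0" by (rule mult_nonneg_nonneg[OF NQ4 K0])
  define C where "C = NQ4 * (trA / c) * \<beta> / (\<beta> - 1)"
  have bound: "\<bar>pi' t q \<psi> TYPE('d) y\<bar> \<le> C * \<beta> powr y" if y0: "y \<ge> 0" for y
  proof -
    define N where "N = nat \<lfloor>y\<rfloor>"
    define Ob where "Ob = {\<tau> \<in> per_orbits t. real (orb_len \<tau>) \<le> y}"
    define WL where "WL = (\<Union>n\<in>{..N}. Wd t n)"
    have finW: "finite (Wd t n)" for n unfolding Wd_def by (rule finite_lists_length_eq) simp
    have finWL: "finite WL" unfolding WL_def using finW by auto
    have sub: "word ` Ob \<subseteq> WL"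
    proof
      fix w assume "w \<in> word ` Ob"
      then obtain \<tau> where tau: "\<tau> \<in> per_orbits t" "real (orb_len \<tau>) \<le> y" "w = word \<tau>" unfolding Ob_def by auto
      have "orb_len \<tau> \<le> N" unfolding N_def using tau(2) by (rule le_nat_floor)
      then show "w \<in> WL" unfolding WL_def using word_in[OF tau(1)] tau(3) by auto
    qed
    have "\<bar>pi' t q \<psi> TYPE('d) y\<bar> \<le> (\<Sum>\<tau>\<in>Ob. \<bar>orb_trace q \<psi> TYPE('d) \<tau>\<bar>)"
      unfolding pi'_def Ob_def by (rule sum_abs)
    also have "\<dots> \<le> (\<Sum>\<tau>\<in>Ob. NQ4 * Fn (word \<tau>))" by (rule sum_mono) (rule trb)
    also have "\<dots> = (\<Sum>w\<in>word ` Ob. NQ4 * Fn w)"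
      using sum.reindex[OF inj_on_subset[OF word_inj[of t]], of Ob "\<lambda>w. NQ4 * Fn w"] unfolding Ob_def
      by (simp add: comp_def)
    also have "\<dots> \<le> (\<Sum>w\<in>WL. NQ4 * Fn w)"
      by (rule sum_mono2[OF finWL sub]) (simp add: NQ4 Fn0)
    also have "\<dots> = (\<Sum>n\<in>{..N}. \<Sum>w\<in>Wd t n. NQ4 * Fn w)"
      unfolding WL_def by (rule sum.UNION_disjoint) (use finW in \<open>auto simp: Wd_def\<close>)
    also have "\<dots> \<le> (\<Sum>n\<in>{..N}. NQ4 * (\<beta>^n * (trA / c)))"
    proof (rule sum_mono)
      fix n
      show "(\<Sum>w\<in>Wd t n. NQ4 * Fn w) \<le> NQ4 * (\<beta>^n * (trA / c))"
        unfolding sum_distrib_left[symmetric] by (rule mult_left_mono[OF sumF NQ4])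
    qed
    also have "\<dots> = NQ4 * (trA / c) * (\<Sum>n<Suc N. \<beta>^n)"
      by (simp add: sum_distrib_left sum_divide_distrib lessThan_Suc_atMost mult_ac)
    also have "\<dots> = NQ4 * (trA / c) * ((\<beta>^Suc N - 1) / (\<beta> - 1))"
      using beta1 by (subst geometric_sum) auto
    also have "\<dots> \<le> NQ4 * (trA / c) * (\<beta>^Suc N / (\<beta> - 1))"
      by (rule mult_left_mono[OF _ K1]) (use beta1 in \<open>auto intro: divide_right_mono\<close>)
    also have "\<dots> \<le> NQ4 * (trA / c) * (\<beta> * \<beta> powr y / (\<beta> - 1))"
    proof -
      have "real N \<le> y" unfolding N_def using y0 by linarith
      then have "\<beta> powr real N \<le> \<beta> powr y" using beta1 by (intro powr_mono) auto
      then have "\<beta>^N \<le> \<beta> powr y" using beta1 by (simp add: powr_realpow)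
      then have "\<beta>^Suc N \<le> \<beta> * \<beta> powr y" using beta1 by simp
      then show ?thesis
        by (intro mult_left_mono[OF _ K1] divide_right_mono) (use beta1 in auto)
    qed
    also have "\<dots> = C * \<beta> powr y" unfolding C_def by simp
    finally show ?thesis .
  qed
  have ev: "eventually (\<lambda>y. norm (pi' t q \<psi> TYPE('d) y / \<beta> powr (\<gamma>' * y)) \<le> C * \<beta> powr ((1 - \<gamma>') * y)) at_top"
    using eventually_ge_at_top[of "0::real"]
  proof eventually_elim
    case (elim y)
    have pos: "\<beta> powr (\<gamma>' * y) > 0" using beta1 by simp
    have "norm (pi' t q \<psi> TYPE('d) y / \<beta> powr (\<gamma>' * y)) = \<bar>pi' t q \<psi> TYPE('d) y\<bar> / \<beta> powr (\<gamma>' * y)"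
      using pos by simp
    also have "\<dots> \<le> C * \<beta> powr y / \<beta> powr (\<gamma>' * y)"
      by (rule divide_right_mono[OF bound[OF elim]]) (use pos in simp)
    also have "\<dots> = C * \<beta> powr ((1 - \<gamma>') * y)"
      by (simp add: powr_diff algebra_simps)
    finally show ?case .
  qed
  show ?thesis by (rule Lim_null_comparison[OF ev lim0[OF beta1 gam]])
qed

end
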